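(* Let $n$ be odd. Let $\theta\sim\mathsf{Bernoulli}(p)$ with $p\in[\frac12,1)$ and, conditionally on $\theta$, let $Y_1,\dots,Y_n$ be i.i.d. with $\Pr(Y_k=1|\theta=1)=\bar\alpha$ and $\Pr(Y_k=1|\theta=0)=\alpha$, where $\alpha\in(0,\frac12)$, $\bar\alpha\bar p>\alpha p$, and $p<\mathsf{P}_{\mathsf{c}}(\theta|Y^n)$. Let $$\zeta_n(\varepsilon)=\frac{\mathsf{P}_{\mathsf{c}}(\theta|Y^n)-\varepsilon^n}{p\bar\alpha^n-\bar p\alpha^n}.$$ Then there exists $\varepsilon_{\mathsf L}<\mathsf{P}_{\mathsf{c}}^{1/n}(\theta|Y^n)$ such that for every $\varepsilon\in[\varepsilon_{\mathsf L},\mathsf{P}_{\mathsf{c}}^{1/n}(\theta|Y^n)]$, $$\max_{P_{Z^n|Y^n}:\ \mathcal{Z}^n=\{0,1\}^n,\ \mathsf{P}_{\mathsf{c}}(\theta|Z^n)\le\varepsilon^n}\mathsf{P}_{\mathsf{c}}(Y^n|Z^n)=1-\zeta_n(\varepsilon)\,(p\bar\alpha^n+\bar p\alpha^n),$$ and the $2^n$-ary Z-channel $\mathsf{Z}_n(\zeta_n(\varepsilon))$ attains this maximum on this interval.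
   Context: $\bar a=1-a$. $\mathsf{P}_{\mathsf{c}}(\theta|Z^n)=\sum_{z^n}\max_{t}P_{\theta Z^n}(t,z^n)$, and similarly for $\mathsf{P}_{\mathsf{c}}(Y^n|Z^n)$, $\mathsf{P}_{\mathsf{c}}(\theta|Y^n)$. The maximum is over channels $P_{Z^n|Y^n}$ with output alphabet $\{0,1\}^n$ acting on $Y^n$ only (so $\theta - Y^n - Z^n$ is a Markov chain). The $2^n$-ary Z-channel $\mathsf{Z}_n(\gamma)$ on $\{0,1\}^n$ is given by $\mathsf{W}(y|y)=1$ for $y\ne\mathbf 1$, $\mathsf{W}(\mathbf 0|\mathbf 1)=\gamma$, $\mathsf{W}(\mathbf 1|\mathbf 1)=1-\gamma$, with $\mathbf 0=(0,\dots,0)$, $\mathbf 1=(1,\dots,1)$. *)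

theory Defs
  imports Complex_Main
begin

text \<open>Binary strings of length n, i.e. the alphabet {0,1}^n (True = 1, False = 0).\<close>
definition cube :: "nat \<Rightarrow> bool list set" where
  "cube n = {ys. length ys = n}"

text \<open>Joint pmf P_{theta Y^n}(t, y): theta ~ Bernoulli(p), Y_k i.i.d. given theta,
  P(Y_k = 1 | theta = 1) = 1 - alpha, P(Y_k = 1 | theta = 0) = alpha.\<close>
definition jointP :: "real \<Rightarrow> real \<Rightarrow> nat \<Rightarrow> bool \<Rightarrow> bool list \<Rightarrow> real" where
  "jointP p \<alpha> n t y =
     (if t then p else 1 - p) * (\<Prod>i<n. if y ! i = t then 1 - \<alpha> else \<alpha>)"

definition PY :: "real \<Rightarrow> real \<Rightarrow> nat \<Rightarrow> bool list \<Rightarrow> real" where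
  "PY p \<alpha> n y = jointP p \<alpha> n True y + jointP p \<alpha> n False y"

text \<open>A channel P_{Z^n|Y^n} with input and output alphabet {0,1}^n; W y z = P(z | y).\<close>
definition is_channel :: "nat \<Rightarrow> (bool list \<Rightarrow> bool list \<Rightarrow> real) \<Rightarrow> bool" where
  "is_channel n W \<longleftrightarrow>
     (\<forall>y\<in>cube n. \<forall>z\<in>cube n. 0 \<le> W y z) \<and> (\<forall>y\<in>cube n. (\<Sum>z\<in>cube n. W y z) = 1)"

definition Pc_theta_Y :: "real \<Rightarrow> real \<Rightarrow> nat \<Rightarrow> real" where
  "Pc_theta_Y p \<alpha> n = (\<Sum>y\<in>cube n. max (jointP p \<alpha> n True y) (jointP p \<alpha> n False y))"

text \<open>P_c(theta | Z^n) for Z^n the output of W on Y^n (Markov chain theta - Y^n - Z^n).\<close>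
definition Pc_theta_Z :: "real \<Rightarrow> real \<Rightarrow> nat \<Rightarrow> (bool list \<Rightarrow> bool list \<Rightarrow> real) \<Rightarrow> real" where
  "Pc_theta_Z p \<alpha> n W = (\<Sum>z\<in>cube n.
      max (\<Sum>y\<in>cube n. jointP p \<alpha> n True y * W y z)
          (\<Sum>y\<in>cube n. jointP p \<alpha> n False y * W y z))"

definition Pc_Y_Z :: "real \<Rightarrow> real \<Rightarrow> nat \<Rightarrow> (bool list \<Rightarrow> bool list \<Rightarrow> real) \<Rightarrow> real" where
  "Pc_Y_Z p \<alpha> n W = (\<Sum>z\<in>cube n. Max ((\<lambda>y. PY p \<alpha> n y * W y z) ` cube n))"

definition Zchan :: "nat \<Rightarrow> real \<Rightarrow> bool list \<Rightarrow> bool list \<Rightarrow> real" where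
  "Zchan n \<gamma> y z =
     (if y = replicate n True then
        (if z = replicate n False then \<gamma> else if z = replicate n True then 1 - \<gamma> else 0)
      else (if z = y then 1 else 0))"

definition zeta :: "real \<Rightarrow> real \<Rightarrow> nat \<Rightarrow> real \<Rightarrow> real" where
  "zeta p \<alpha> n \<epsilon> = (Pc_theta_Y p \<alpha> n - \<epsilon> ^ n) / (p * (1 - \<alpha>) ^ n - (1 - p) * \<alpha> ^ n)"

end

theory Submission
  imports Defs
begin

lemma cube_Suc: "cube (Suc n) = Cons True ` cube n \<union> Cons False ` cube n"
  unfolding cube_def by (force simp: length_Suc_conv)

lemma cube_0: "cube 0 = {[]}"
  unfolding cube_def by auto

lemma finite_cube: "finite (cube n)"
  by (induction n) (auto simp: cube_Suc cube_0)

lemma sum_prod_cube: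
  fixes g :: "nat \<Rightarrow> bool \<Rightarrow> real"
  shows "(\<Sum>y\<in>cube n. \<Prod>i<n. g i (y!i)) = (\<Prod>i<n. g i True + g i False)"
proof (induction n arbitrary: g)
  case 0
  then show ?case by (simp add: cube_0)
next
  case (Suc n)
  have d: "Cons True ` cube n \<inter> Cons False ` cube n = {}" by auto
  have r: "(\<Sum>y\<in>Cons b ` cube n. \<Prod>i<Suc n. g i (y!i)) = g 0 b * (\<Prod>i<n. g (Suc i) True + g (Suc i) False)" for b
  proof -
    have "(\<Sum>y\<in>Cons b ` cube n. \<Prod>i<Suc n. g i (y!i)) = (\<Sum>ys\<in>cube n. \<Prod>i<Suc n. g i ((b#ys)!i))"
      by (subst sum.reindex) (auto simp: inj_on_def)
    also have "\<dots> = (\<Sum>ys\<in>cube n. g 0 b * (\<Prod>i<n. g (Suc i) (ys!i)))"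
      by (simp add: prod.lessThan_Suc_shift del: prod.lessThan_Suc)
    also have "\<dots> = g 0 b * (\<Prod>i<n. g (Suc i) True + g (Suc i) False)"
      using Suc.IH[of "\<lambda>i. g (Suc i)"] by (simp add: sum_distrib_left[symmetric])
    finally show ?thesis .
  qed
  have "(\<Sum>y\<in>cube (Suc n). \<Prod>i<Suc n. g i (y!i)) = (\<Sum>y\<in>Cons True ` cube n. \<Prod>i<Suc n. g i (y!i)) + (\<Sum>y\<in>Cons False ` cube n. \<Prod>i<Suc n. g i (y!i))"
    unfolding cube_Suc by (rule sum.union_disjoint) (auto simp: finite_cube)
  also have "\<dots> = (\<Prod>i<Suc n. g i True + g i False)"
    unfolding r by (simp only: prod.lessThan_Suc_shift) (simp add: algebra_simps)
  finally show ?case .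
qed

lemma sum_jointP: "(\<Sum>y\<in>cube n. jointP p \<alpha> n t y) = (if t then p else 1 - p)"
proof -
  have "(\<Sum>y\<in>cube n. jointP p \<alpha> n t y) = (if t then p else 1 - p) * (\<Sum>y\<in>cube n. \<Prod>i<n. (\<lambda>i b. if b = t then 1 - \<alpha> else \<alpha>) i (y!i))"
    unfolding jointP_def by (simp add: sum_distrib_left)
  also have "\<dots> = (if t then p else 1 - p)"
    by (subst sum_prod_cube) auto
  finally show ?thesis .
qed

lemma sum_PY: "(\<Sum>y\<in>cube n. PY p \<alpha> n y) = 1"
  unfolding PY_def by (simp add: sum.distrib sum_jointP)

lemma jointP_nonneg: "0 \<le> p \<Longrightarrow> p \<le> 1 \<Longrightarrow> 0 \<le> \<alpha> \<Longrightarrow> \<alpha> \<le> 1 \<Longrightarrow> 0 \<le> jointP p \<alpha> n t y"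
  unfolding jointP_def by (intro mult_nonneg_nonneg prod_nonneg) auto

lemma jointP_T1: "jointP p \<alpha> n True (replicate n True) = p * (1-\<alpha>)^n"
  unfolding jointP_def by simp
lemma jointP_F1: "jointP p \<alpha> n False (replicate n True) = (1-p) * \<alpha>^n"
  unfolding jointP_def by simp
lemma jointP_T0: "jointP p \<alpha> n True (replicate n False) = p * \<alpha>^n"
  unfolding jointP_def by simp
lemma jointP_F0: "jointP p \<alpha> n False (replicate n False) = (1-p) * (1-\<alpha>)^n"
  unfolding jointP_def by simp

lemma abs_aux:
  fixes A B A1 B1 :: real
  shows "A*B1 \<le> A1*B \<Longrightarrow> B*B1 \<le> A*A1 \<Longrightarrow> \<bar>A-B\<bar>*(A1+B1) \<le> (A1-B1)*(A+B)"
  by (cases "A \<ge> B") (auto simp: algebra_simps)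

lemma key:
  assumes "0 < \<alpha>" "\<alpha> < 1/2" "1/2 \<le> p" "p < 1"
  shows "\<bar>jointP p \<alpha> n True y - jointP p \<alpha> n False y\<bar> * (p*(1-\<alpha>)^n + (1-p)*\<alpha>^n)
     \<le> (p*(1-\<alpha>)^n - (1-p)*\<alpha>^n) * (jointP p \<alpha> n True y + jointP p \<alpha> n False y)"
proof (rule abs_aux)
  have aa: "\<alpha>*\<alpha> \<le> (1-\<alpha>)*(1-\<alpha>)" by (rule mult_mono) (use assms in auto)
  have "jointP p \<alpha> n True y * ((1-p)*\<alpha>^n) = p*(1-p) * (\<Prod>i<n. (if y!i then 1-\<alpha> else \<alpha>) * \<alpha>)"
    unfolding jointP_def by (simp add: prod.distrib)
  also have "\<dots> \<le> p*(1-p) * (\<Prod>i<n. (1-\<alpha>) * (if \<not> y!i then 1-\<alpha> else \<alpha>))"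
    using assms aa by (intro mult_left_mono prod_mono) auto
  also have "\<dots> = (p*(1-\<alpha>)^n) * jointP p \<alpha> n False y"
    unfolding jointP_def by (simp add: prod.distrib)
  finally show "jointP p \<alpha> n True y * ((1-p)*\<alpha>^n) \<le> (p*(1-\<alpha>)^n) * jointP p \<alpha> n False y" .
  have pp: "(1-p)*(1-p) \<le> p*p" by (rule mult_mono) (use assms in auto)
  have "jointP p \<alpha> n False y * ((1-p)*\<alpha>^n) = (1-p)*(1-p) * (\<Prod>i<n. (if \<not> y!i then 1-\<alpha> else \<alpha>) * \<alpha>)"
    unfolding jointP_def by (simp add: prod.distrib)
  also have "\<dots> \<le> p*p * (\<Prod>i<n. (if y!i then 1-\<alpha> else \<alpha>) * (1-\<alpha>))"
    using assms aa pp by (intro mult_mono prod_mono prod_nonneg) auto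
  also have "\<dots> = jointP p \<alpha> n True y * (p*(1-\<alpha>)^n)"
    unfolding jointP_def by (simp add: prod.distrib)
  finally show "jointP p \<alpha> n False y * ((1-p)*\<alpha>^n) \<le> jointP p \<alpha> n True y * (p*(1-\<alpha>)^n)" .
qed


lemma perz:
  fixes A B W :: "'a \<Rightarrow> real" and L :: real
  assumes S: "finite S" "S \<noteq> {}"
    and nn: "\<And>y. y \<in> S \<Longrightarrow> 0 \<le> W y"
    and k: "\<And>y. y \<in> S \<Longrightarrow> \<bar>A y - B y\<bar> \<le> L * (A y + B y)"
  shows "(\<Sum>y\<in>S. max (A y) (B y) * W y) - max (\<Sum>y\<in>S. A y * W y) (\<Sum>y\<in>S. B y * W y)
     \<le> L * ((\<Sum>y\<in>S. (A y + B y) * W y) - Max ((\<lambda>y. (A y + B y) * W y) ` S))"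
proof -
  obtain ys where ys: "ys \<in> S" "(A ys + B ys) * W ys = Max ((\<lambda>y. (A y + B y) * W y) ` S)"
  proof -
    have "Max ((\<lambda>y. (A y + B y) * W y) ` S) \<in> (\<lambda>y. (A y + B y) * W y) ` S"
      using S by (intro Max_in) auto
    then show ?thesis using that by (metis (no_types, lifting) imageE)
  qed
  have R: "L * ((\<Sum>y\<in>S. (A y + B y) * W y) - Max ((\<lambda>y. (A y + B y) * W y) ` S))
       = (\<Sum>y\<in>S - {ys}. L * ((A y + B y) * W y))"
    using ys S by (simp add: sum.remove sum_distrib_left)
  have gen: "(\<Sum>y\<in>S. max (A y) (B y) * W y) - (\<Sum>y\<in>S. C y * W y) \<le> L * ((\<Sum>y\<in>S. (A y + B y) * W y) - Max ((\<lambda>y. (A y + B y) * W y) ` S))"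
    if C: "C ys = max (A ys) (B ys)" "\<And>y. y \<in> S \<Longrightarrow> C y = A y \<or> C y = B y" for C
  proof -
    have "(\<Sum>y\<in>S. max (A y) (B y) * W y) - (\<Sum>y\<in>S. C y * W y) = (\<Sum>y\<in>S. (max (A y) (B y) - C y) * W y)"
      by (simp add: sum_subtractf left_diff_distrib)
    also have "\<dots> = (\<Sum>y\<in>S - {ys}. (max (A y) (B y) - C y) * W y)"
      using ys S C by (simp add: sum.remove)
    also have "\<dots> \<le> (\<Sum>y\<in>S - {ys}. L * ((A y + B y) * W y))"
    proof (rule sum_mono)
      fix y assume y: "y \<in> S - {ys}"
      have "max (A y) (B y) - C y \<le> L * (A y + B y)"
        using C(2)[of y] k[of y] y by (auto simp: max_def abs_if split: if_splits)
      then have "(max (A y) (B y) - C y) * W y \<le> L * (A y + B y) * W y"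
        using nn[of y] y by (intro mult_right_mono) auto
      then show "(max (A y) (B y) - C y) * W y \<le> L * ((A y + B y) * W y)" by simp
    qed
    finally show ?thesis using R by simp
  qed
  show ?thesis
  proof (cases "A ys \<ge> B ys")
    case True
    have "(\<Sum>y\<in>S. max (A y) (B y) * W y) - (\<Sum>y\<in>S. A y * W y) \<le> L * ((\<Sum>y\<in>S. (A y + B y) * W y) - Max ((\<lambda>y. (A y + B y) * W y) ` S))"
      using True by (intro gen) auto
    then show ?thesis by linarith
  next
    case False
    have "(\<Sum>y\<in>S. max (A y) (B y) * W y) - (\<Sum>y\<in>S. B y * W y) \<le> L * ((\<Sum>y\<in>S. (A y + B y) * W y) - Max ((\<lambda>y. (A y + B y) * W y) ` S))"
      using False by (intro gen) auto
    then show ?thesis by linarith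
  qed
qed

lemma cube_ne: "cube n \<noteq> {}"
  unfolding cube_def by (auto intro: exI[of _ "replicate n True"])

lemma converse:
  assumes "0 < \<alpha>" "\<alpha> < 1/2" "1/2 \<le> p" "p < 1" "n > 0" and W: "is_channel n W"
  shows "Pc_theta_Y p \<alpha> n - Pc_theta_Z p \<alpha> n W
     \<le> ((p*(1-\<alpha>)^n - (1-p)*\<alpha>^n) / (p*(1-\<alpha>)^n + (1-p)*\<alpha>^n)) * (1 - Pc_Y_Z p \<alpha> n W)"
proof -
  define L where "L = (p*(1-\<alpha>)^n - (1-p)*\<alpha>^n) / (p*(1-\<alpha>)^n + (1-p)*\<alpha>^n)"
  define A where "A = jointP p \<alpha> n True"
  define B where "B = jointP p \<alpha> n False"
  have pos: "p*(1-\<alpha>)^n + (1-p)*\<alpha>^n > 0"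
    using assms by (intro add_pos_nonneg mult_pos_pos) auto
  have kk: "\<bar>A y - B y\<bar> \<le> L * (A y + B y)" for y
    using key[OF assms(1-4), of n y] pos unfolding L_def A_def B_def
    by (simp add: pos_le_divide_eq)
  have Wn: "\<And>y z. y \<in> cube n \<Longrightarrow> z \<in> cube n \<Longrightarrow> 0 \<le> W y z"
    and Ws: "\<And>y. y \<in> cube n \<Longrightarrow> (\<Sum>z\<in>cube n. W y z) = 1"
    using W unfolding is_channel_def by auto
  have "Pc_theta_Y p \<alpha> n - Pc_theta_Z p \<alpha> n W = (\<Sum>z\<in>cube n.
      (\<Sum>y\<in>cube n. max (A y) (B y) * W y z) - max (\<Sum>y\<in>cube n. A y * W y z) (\<Sum>y\<in>cube n. B y * W y z))"
  proof -
    have "Pc_theta_Y p \<alpha> n = (\<Sum>y\<in>cube n. max (A y) (B y) * (\<Sum>z\<in>cube n. W y z))"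
      unfolding Pc_theta_Y_def A_def B_def using Ws by simp
    also have "\<dots> = (\<Sum>z\<in>cube n. \<Sum>y\<in>cube n. max (A y) (B y) * W y z)"
      by (simp add: sum_distrib_left) (rule sum.swap)
    finally show ?thesis unfolding Pc_theta_Z_def A_def B_def by (simp add: sum_subtractf)
  qed
  also have "\<dots> \<le> (\<Sum>z\<in>cube n. L * ((\<Sum>y\<in>cube n. (A y + B y) * W y z) - Max ((\<lambda>y. (A y + B y) * W y z) ` cube n)))"
    by (intro sum_mono perz) (auto simp: finite_cube cube_ne Wn kk)
  also have "\<dots> = L * (1 - Pc_Y_Z p \<alpha> n W)"
  proof -
    have "(\<Sum>z\<in>cube n. \<Sum>y\<in>cube n. (A y + B y) * W y z) = (\<Sum>y\<in>cube n. (A y + B y) * (\<Sum>z\<in>cube n. W y z))"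
      by (simp add: sum_distrib_left) (rule sum.swap)
    also have "\<dots> = 1" using Ws sum_PY[of p \<alpha> n] by (simp add: PY_def A_def B_def)
    finally show ?thesis unfolding Pc_Y_Z_def PY_def A_def B_def
      by (simp add: sum_distrib_left[symmetric] sum_subtractf)
  qed
  finally show ?thesis unfolding L_def .
qed


lemma split2:
  assumes "finite S" "e \<in> S" "u \<in> S" "e \<noteq> u"
  shows "sum F S = F e + F u + sum F (S - {e, u})"
proof -
  have "sum F S = F e + sum F (S - {e})" using assms by (simp add: sum.remove)
  also have "sum F (S - {e}) = F u + sum F (S - {e} - {u})" using assms by (simp add: sum.remove)
  also have "S - {e} - {u} = S - {e, u}" by auto
  finally show ?thesis by (simp add: add.assoc)
qed

lemma zsum:
  fixes f :: "bool list \<Rightarrow> real"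
  assumes "finite S" "replicate n True \<in> S" "z \<in> S"
  shows "(\<Sum>y\<in>S. f y * Zchan n \<gamma> y z) = f (replicate n True) *
     (if z = replicate n False then \<gamma> else if z = replicate n True then 1 - \<gamma> else 0)
     + (if z \<noteq> replicate n True then f z else 0)"
proof -
  have "(\<Sum>y\<in>S. f y * Zchan n \<gamma> y z) = f (replicate n True) * Zchan n \<gamma> (replicate n True) z
      + (\<Sum>y\<in>S - {replicate n True}. f y * Zchan n \<gamma> y z)"
    using assms by (simp add: sum.remove)
  also have "(\<Sum>y\<in>S - {replicate n True}. f y * Zchan n \<gamma> y z) = (\<Sum>y\<in>S - {replicate n True}. if z = y then f y else 0)"
    by (rule sum.cong) (auto simp: Zchan_def)
  also have "\<dots> = (if z \<noteq> replicate n True then f z else 0)"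
    using assms by (simp add: sum.delta)
  finally show ?thesis by (simp add: Zchan_def)
qed

lemma achieve:
  assumes a: "0 < \<alpha>" "\<alpha> < 1/2" "1/2 \<le> p" "p < 1" "n > 0"
    and g: "0 \<le> \<gamma>" "\<gamma> \<le> 1"
    and g1: "\<gamma> * (p*(1-\<alpha>)^n - (1-p)*\<alpha>^n) \<le> (1-p)*(1-\<alpha>)^n - p*\<alpha>^n"
    and g2: "\<gamma> * (p*(1-\<alpha>)^n + (1-p)*\<alpha>^n) \<le> (1-p)*(1-\<alpha>)^n + p*\<alpha>^n"
  shows "is_channel n (Zchan n \<gamma>)"
    "Pc_theta_Z p \<alpha> n (Zchan n \<gamma>) = Pc_theta_Y p \<alpha> n - \<gamma> * (p*(1-\<alpha>)^n - (1-p)*\<alpha>^n)"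
    "Pc_Y_Z p \<alpha> n (Zchan n \<gamma>) = 1 - \<gamma> * (p*(1-\<alpha>)^n + (1-p)*\<alpha>^n)"
proof -
  define o1 where "o1 = replicate n True"
  define e0 where "e0 = replicate n False"
  define S where "S = cube n"
  have fS: "finite S" unfolding S_def by (rule finite_cube)
  have oS: "o1 \<in> S" and eS: "e0 \<in> S" unfolding S_def o1_def e0_def cube_def by auto
  have eo: "e0 \<noteq> o1" unfolding o1_def e0_def using a(5) by (cases n) auto
  have al: "\<alpha>^n \<le> (1-\<alpha>)^n" using a by (intro power_mono) auto
  show "is_channel n (Zchan n \<gamma>)"
    unfolding is_channel_def
  proof (intro conjI ballI)
    fix y z assume "y \<in> cube n" "z \<in> cube n"
    show "0 \<le> Zchan n \<gamma> y z" using g by (auto simp: Zchan_def)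
  next
    fix y assume y: "y \<in> cube n"
    show "(\<Sum>z\<in>cube n. Zchan n \<gamma> y z) = 1"
    proof (cases "y = o1")
      case True
      have "(\<Sum>z\<in>cube n. Zchan n \<gamma> y z) = Zchan n \<gamma> y e0 + Zchan n \<gamma> y o1 + (\<Sum>z\<in>cube n - {e0, o1}. Zchan n \<gamma> y z)"
        using split2[OF fS eS oS eo] S_def by blast
      also have "(\<Sum>z\<in>cube n - {e0, o1}. Zchan n \<gamma> y z) = 0"
        using True by (intro sum.neutral) (auto simp: Zchan_def o1_def e0_def)
      finally show ?thesis using True eo by (simp add: Zchan_def o1_def e0_def)
    next
      case False
      then have "(\<Sum>z\<in>cube n. Zchan n \<gamma> y z) = (\<Sum>z\<in>cube n. if y = z then 1 else 0)"
        by (intro sum.cong) (auto simp: Zchan_def o1_def)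
      then show ?thesis using y by (simp add: sum.delta finite_cube)
    qed
  qed
  define A where "A = jointP p \<alpha> n True"
  define B where "B = jointP p \<alpha> n False"
  have A1: "A o1 = p*(1-\<alpha>)^n" and B1: "B o1 = (1-p)*\<alpha>^n"
    and Ae: "A e0 = p*\<alpha>^n" and Be: "B e0 = (1-p)*(1-\<alpha>)^n"
    unfolding A_def B_def o1_def e0_def
    by (simp_all only: jointP_T1 jointP_F1 jointP_T0 jointP_F0)
  have AB1: "B o1 \<le> A o1" unfolding A1 B1 using a al by (intro mult_mono) auto
  have "0 \<le> \<gamma> * (p*(1-\<alpha>)^n - (1-p)*\<alpha>^n)" using AB1 g unfolding A1 B1 by simp
  then have ABe: "A e0 \<le> B e0" unfolding Ae Be using g1 by linarith
  have Ann: "0 \<le> A y" "0 \<le> B y" for y unfolding A_def B_def using a by (auto intro!: jointP_nonneg)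
  have P: "Pc_theta_Y p \<alpha> n = max (A e0) (B e0) + max (A o1) (B o1) + (\<Sum>y\<in>S - {e0, o1}. max (A y) (B y))"
    unfolding Pc_theta_Y_def A_def B_def S_def[symmetric] by (rule split2[OF fS eS oS eo])
  have "Pc_theta_Z p \<alpha> n (Zchan n \<gamma>) = (\<Sum>z\<in>S. max (A o1 * (if z = e0 then \<gamma> else if z = o1 then 1 - \<gamma> else 0) + (if z \<noteq> o1 then A z else 0))
      (B o1 * (if z = e0 then \<gamma> else if z = o1 then 1 - \<gamma> else 0) + (if z \<noteq> o1 then B z else 0)))"
    unfolding Pc_theta_Z_def A_def B_def S_def[symmetric] o1_def e0_def
    by (intro sum.cong refl) (simp only: zsum[OF fS oS[unfolded o1_def]])
  also have "\<dots> = max (A o1 * \<gamma> + A e0) (B o1 * \<gamma> + B e0) + max (A o1 * (1-\<gamma>)) (B o1 * (1-\<gamma>)) + (\<Sum>y\<in>S - {e0, o1}. max (A y) (B y))"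
    by (subst split2[OF fS eS oS eo]) (auto simp: eo eo[symmetric] intro!: sum.cong)
  also have "max (A o1 * \<gamma> + A e0) (B o1 * \<gamma> + B e0) = B o1 * \<gamma> + B e0"
    using g1 unfolding A1 B1 Ae Be by (simp add: algebra_simps)
  also have "max (A o1 * (1-\<gamma>)) (B o1 * (1-\<gamma>)) = A o1 * (1-\<gamma>)"
    using AB1 g by (simp add: mult_right_mono)
  finally show "Pc_theta_Z p \<alpha> n (Zchan n \<gamma>) = Pc_theta_Y p \<alpha> n - \<gamma> * (p*(1-\<alpha>)^n - (1-p)*\<alpha>^n)"
    unfolding P using AB1 ABe unfolding A1 B1 by (simp add: algebra_simps)
  define Q where "Q y = A y + B y" for y
  have Qn: "0 \<le> Q y" for y unfolding Q_def using Ann by (simp add: add_nonneg_nonneg)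
  have PYQ: "PY p \<alpha> n = Q" unfolding Q_def A_def B_def PY_def by auto
  have hQ: "\<gamma> * Q o1 \<le> Q e0" using g2 unfolding Q_def A1 B1 Ae Be by (simp add: algebra_simps)
  have hQ2: "0 \<le> (1-\<gamma>) * Q o1" using g Qn[of o1] by simp
  have M: "Max ((\<lambda>y. Q y * Zchan n \<gamma> y z) ` S) =
     (if z = e0 then Q e0 else if z = o1 then (1-\<gamma>) * Q o1 else Q z)" if z: "z \<in> S" for z
  proof (rule Max_eqI)
    show "finite ((\<lambda>y. Q y * Zchan n \<gamma> y z) ` S)" using fS by simp
  next
    fix x assume "x \<in> (\<lambda>y. Q y * Zchan n \<gamma> y z) ` S"
    then obtain y where y: "y \<in> S" "x = Q y * Zchan n \<gamma> y z" by auto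
    show "x \<le> (if z = e0 then Q e0 else if z = o1 then (1-\<gamma>) * Q o1 else Q z)"
      using y g hQ eo Qn[of y] Qn[of o1] Qn[of e0] Qn[of z] hQ2 unfolding Zchan_def o1_def[symmetric] e0_def[symmetric]
      by (auto simp: mult.commute)
  next
    show "(if z = e0 then Q e0 else if z = o1 then (1-\<gamma>) * Q o1 else Q z) \<in> (\<lambda>y. Q y * Zchan n \<gamma> y z) ` S"
      using z eS oS eo by (auto simp: Zchan_def o1_def[symmetric] e0_def[symmetric] intro: rev_image_eqI)
  qed
  have one: "1 = Q e0 + Q o1 + (\<Sum>y\<in>S - {e0, o1}. Q y)"
    using sum_PY[of p \<alpha> n] split2[OF fS eS oS eo, of Q] unfolding PYQ S_def by simp
  have "Pc_Y_Z p \<alpha> n (Zchan n \<gamma>) = (\<Sum>z\<in>S. if z = e0 then Q e0 else if z = o1 then (1-\<gamma>) * Q o1 else Q z)"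
    unfolding Pc_Y_Z_def PYQ S_def[symmetric] using M by (intro sum.cong) auto
  also have "\<dots> = Q e0 + (1-\<gamma>) * Q o1 + (\<Sum>y\<in>S - {e0, o1}. Q y)"
    by (subst split2[OF fS eS oS eo]) (auto simp: eo eo[symmetric] intro!: sum.cong)
  finally show "Pc_Y_Z p \<alpha> n (Zchan n \<gamma>) = 1 - \<gamma> * (p*(1-\<alpha>)^n + (1-p)*\<alpha>^n)"
    using one unfolding Q_def A1 B1 by (simp add: algebra_simps)
qed

theorem proposition3:
  fixes n :: nat and p \<alpha> :: real
  assumes "odd n"
    and "1/2 \<le> p" "p < 1"
    and "0 < \<alpha>" "\<alpha> < 1/2"
    and "(1 - \<alpha>) * (1 - p) > \<alpha> * p"
    and "p < Pc_theta_Y p \<alpha> n"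
  shows "\<exists>\<epsilon>L < root n (Pc_theta_Y p \<alpha> n).
           \<forall>\<epsilon>. \<epsilon>L \<le> \<epsilon> \<and> \<epsilon> \<le> root n (Pc_theta_Y p \<alpha> n) \<longrightarrow>
             (is_channel n (Zchan n (zeta p \<alpha> n \<epsilon>))
              \<and> Pc_theta_Z p \<alpha> n (Zchan n (zeta p \<alpha> n \<epsilon>)) \<le> \<epsilon> ^ n
              \<and> Pc_Y_Z p \<alpha> n (Zchan n (zeta p \<alpha> n \<epsilon>))
                  = 1 - zeta p \<alpha> n \<epsilon> * (p * (1 - \<alpha>) ^ n + (1 - p) * \<alpha> ^ n))
             \<and> (\<forall>W. is_channel n W \<and> Pc_theta_Z p \<alpha> n W \<le> \<epsilon> ^ n \<longrightarrow>
                  Pc_Y_Z p \<alpha> n W \<le> 1 - zeta p \<alpha> n \<epsilon> * (p * (1 - \<alpha>) ^ n + (1 - p) * \<alpha> ^ n))"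
proof -
  have n0: "n > 0" using assms(1) by (cases n) auto
  have a: "0 < \<alpha>" "\<alpha> < 1/2" "1/2 \<le> p" "p < 1" using assms by auto
  define P where "P = Pc_theta_Y p \<alpha> n"
  define c where "c = p*(1-\<alpha>)^n - (1-p)*\<alpha>^n"
  define Q1 where "Q1 = p*(1-\<alpha>)^n + (1-p)*\<alpha>^n"
  define D where "D = (1-p)*(1-\<alpha>)^n - p*\<alpha>^n"
  define Q0 where "Q0 = (1-p)*(1-\<alpha>)^n + p*\<alpha>^n"
  have alp: "\<alpha>^n < (1-\<alpha>)^n" using a n0 by (intro power_strict_mono) auto
  have c0: "c > 0"
  proof -
    have "(1-p)*\<alpha>^n \<le> p*\<alpha>^n" using a by (intro mult_right_mono) auto
    also have "\<dots> < p*(1-\<alpha>)^n" using a alp by simp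
    finally show ?thesis unfolding c_def by simp
  qed
  have Q10: "Q1 > 0" unfolding Q1_def using a by (intro add_pos_nonneg mult_pos_pos) auto
  have Q00: "Q0 > 0" unfolding Q0_def using a by (intro add_pos_nonneg mult_pos_pos) auto
  have D0: "D > 0"
  proof -
    obtain m where m: "n = Suc m" using n0 by (cases n) auto
    have "p*\<alpha>^n = (\<alpha>*p) * \<alpha>^m" unfolding m by simp
    also have "\<dots> \<le> (\<alpha>*p) * (1-\<alpha>)^m" using a by (intro mult_left_mono power_mono) auto
    also have "\<dots> < ((1-\<alpha>)*(1-p)) * (1-\<alpha>)^m" using assms(6) a by (intro mult_strict_right_mono) auto
    also have "\<dots> = (1-p)*(1-\<alpha>)^n" unfolding m by simp
    finally show ?thesis unfolding D_def by simp
  qed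
  define \<delta> where "\<delta> = min 1 (min (D/c) (Q0/Q1))"
  have d0: "\<delta> > 0" unfolding \<delta>_def using c0 D0 Q00 Q10 by simp
  have P0: "P > 0" using assms(7) a unfolding P_def by simp
  define eL where "eL = root n (max 0 (P - c*\<delta>))"
  have cd: "c*\<delta> > 0" using c0 d0 by simp
  show ?thesis
  proof (rule exI[of _ eL], intro conjI allI impI)
    show "eL < root n (Pc_theta_Y p \<alpha> n)"
      unfolding eL_def P_def[symmetric] using n0 P0 cd by (simp add: real_root_less_iff)
  next
    fix \<epsilon> assume e: "eL \<le> \<epsilon> \<and> \<epsilon> \<le> root n (Pc_theta_Y p \<alpha> n)"
    have eL0: "0 \<le> eL" unfolding eL_def using n0 by simp
    have e0: "0 \<le> \<epsilon>" using e eL0 by linarith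
    have up: "\<epsilon>^n \<le> P"
    proof -
      have "\<epsilon>^n \<le> root n P ^ n" using e e0 unfolding P_def by (intro power_mono) auto
      also have "\<dots> = P" using n0 P0 by (simp add: real_root_pow_pos2)
      finally show ?thesis .
    qed
    have lo: "P - c*\<delta> \<le> \<epsilon>^n"
    proof -
      have "eL^n \<le> \<epsilon>^n" using e eL0 by (intro power_mono) auto
      moreover have "eL^n = max 0 (P - c*\<delta>)" unfolding eL_def using n0 by (simp add: real_root_pow_pos2)
      ultimately show ?thesis by simp
    qed
    define \<gamma> where "\<gamma> = zeta p \<alpha> n \<epsilon>"
    have gdef: "\<gamma> = (P - \<epsilon>^n) / c" unfolding \<gamma>_def zeta_def P_def c_def ..
    have gc: "\<gamma> * c = P - \<epsilon>^n" unfolding gdef using c0 by simp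
    have g0: "0 \<le> \<gamma>" unfolding gdef using up c0 by simp
    have gd: "\<gamma> \<le> \<delta>" unfolding gdef using lo c0 by (simp add: divide_le_eq mult.commute)
    have g1: "\<gamma> \<le> 1" using gd unfolding \<delta>_def by simp
    have g2: "\<gamma> * c \<le> D"
    proof -
      have "\<gamma> \<le> D/c" using gd unfolding \<delta>_def by simp
      then show ?thesis using c0 by (simp add: le_divide_eq)
    qed
    have g3: "\<gamma> * Q1 \<le> Q0"
    proof -
      have "\<gamma> \<le> Q0/Q1" using gd unfolding \<delta>_def by simp
      then show ?thesis using Q10 by (simp add: le_divide_eq)
    qed
    note ach = achieve[OF a n0 g0 g1 g2[unfolded c_def D_def] g3[unfolded Q1_def Q0_def]]
    show "is_channel n (Zchan n (zeta p \<alpha> n \<epsilon>))" using ach(1) unfolding \<gamma>_def .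
    show "Pc_theta_Z p \<alpha> n (Zchan n (zeta p \<alpha> n \<epsilon>)) \<le> \<epsilon> ^ n"
      using ach(2) gc unfolding \<gamma>_def[symmetric] P_def c_def by simp
    show "Pc_Y_Z p \<alpha> n (Zchan n (zeta p \<alpha> n \<epsilon>)) = 1 - zeta p \<alpha> n \<epsilon> * (p * (1 - \<alpha>) ^ n + (1 - p) * \<alpha> ^ n)"
      using ach(3) unfolding \<gamma>_def .
  next
    fix \<epsilon> W assume e: "eL \<le> \<epsilon> \<and> \<epsilon> \<le> root n (Pc_theta_Y p \<alpha> n)"
      and W: "is_channel n W \<and> Pc_theta_Z p \<alpha> n W \<le> \<epsilon> ^ n"
    have cv: "P - Pc_theta_Z p \<alpha> n W \<le> (c/Q1) * (1 - Pc_Y_Z p \<alpha> n W)"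
      using converse[OF a n0, of W] W unfolding P_def c_def Q1_def by simp
    have "zeta p \<alpha> n \<epsilon> * Q1 * (c/Q1) = P - \<epsilon>^n"
      unfolding zeta_def P_def[symmetric] c_def[symmetric] using c0 Q10 by simp
    also have "\<dots> \<le> (c/Q1) * (1 - Pc_Y_Z p \<alpha> n W)" using cv W by linarith
    finally have "(c/Q1) * (zeta p \<alpha> n \<epsilon> * Q1) \<le> (c/Q1) * (1 - Pc_Y_Z p \<alpha> n W)"
      by (simp add: mult.commute)
    then have "zeta p \<alpha> n \<epsilon> * Q1 \<le> 1 - Pc_Y_Z p \<alpha> n W"
      by (rule mult_left_le_imp_le) (use c0 Q10 in auto)
    then show "Pc_Y_Z p \<alpha> n W \<le> 1 - zeta p \<alpha> n \<epsilon> * (p * (1 - \<alpha>) ^ n + (1 - p) * \<alpha> ^ n)"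
      unfolding Q1_def by linarith
  qed
qed

end
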